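(* Let $d_1,d_2$ be positive integers with $2\leq d_1\leq d_2$. Then $$\binom{d_1+d_2}{d_1}\leq 2d_1d_2$$ if and only if $d_1=2$ and $d_2\leq 4$. *)

theory Defs
  imports Main
begin

end

theory Submission
  imports Defs "HOL.Binomial_Plus"
begin

lemma choose3: "6 * (n choose 3) = n * (n - 1) * (n - 2)"
proof (induction n)
  case 0 then show ?case by simp
next
  case (Suc n)
  have "(Suc n) choose 3 = (n choose 2) + (n choose 3)"
    by (simp add: numeral_3_eq_3 numeral_2_eq_2)
  moreover have "2 * (n choose 2) = n * (n - 1)"
  proof -
    have "even (n * (n - 1))" by (cases n) auto
    thus ?thesis by (simp add: choose_two)
  qed
  ultimately show ?case using Suc
    by (cases n; cases "n - 1"; simp add: algebra_simps)
qed

theorem lemmaA3: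
  fixes d1 d2 :: nat
  assumes "2 \<le> d1" and "d1 \<le> d2"
  shows "((d1 + d2) choose d1 \<le> 2 * d1 * d2) \<longleftrightarrow> (d1 = 2 \<and> d2 \<le> 4)"
proof (cases "d1 = 2")
  case True
  have "2 * ((d2 + 2) choose 2) = (d2 + 2) * (d2 + 1)" by (simp add: choose_two)
  hence e: "2 * ((d1 + d2) choose d1) = (d2 + 2) * (d2 + 1)" using True by (simp add: add.commute)
  have "((d2 + 2) * (d2 + 1) \<le> 8 * d2) \<longleftrightarrow> d2 \<le> 4"
  proof
    assume h: "(d2 + 2) * (d2 + 1) \<le> 8 * d2"
    show "d2 \<le> 4"
    proof (rule ccontr)
      assume "\<not> d2 \<le> 4"
      hence "5 \<le> d2" by simp
      hence a: "5 * d2 \<le> d2 * d2" by simp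
      have "(d2 + 2) * (d2 + 1) = d2 * d2 + 3 * d2 + 2" by (simp add: algebra_simps)
      thus False using h a by linarith
    qed
  next
    assume "d2 \<le> 4"
    hence "d2 \<in> {0,1,2,3,4}" by auto
    thus "(d2 + 2) * (d2 + 1) \<le> 8 * d2" using assms True by auto
  qed
  then show ?thesis using e True by auto
next
  case False
  let ?n = "d1 + d2"
  have "?n choose 3 \<le> ?n choose d1"
    using binomial_mono[of 3 d1 ?n] assms False by simp
  moreover have "2 * d1 * d2 < ?n choose 3"
  proof -
    have n6: "?n \<ge> 6" using assms False by simp
    have "4 * (d1 * d2) \<le> ?n * ?n"
    proof -
      have "(int d1 - int d2)^2 \<ge> 0" by simp
      hence "4 * (int d1 * int d2) \<le> (int d1 + int d2) * (int d1 + int d2)"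
        by (simp add: power2_eq_square algebra_simps)
      thus ?thesis by (simp flip: of_nat_mult of_nat_add)
    qed
    moreover have "3 * ?n < (?n - 1) * (?n - 2)"
    proof -
      obtain m where m: "?n = m + 6" using n6 by (metis add.commute le_Suc_ex)
      show ?thesis unfolding m by (simp add: algebra_simps)
    qed
    hence "3 * ?n * ?n < (?n - 1) * (?n - 2) * ?n"
      by (rule mult_strict_right_mono) (use n6 in auto)
    hence "3 * ?n * ?n < ?n * (?n - 1) * (?n - 2)" by (metis mult.commute mult.assoc)
    ultimately have "12 * (d1 * d2) < 6 * (?n choose 3)"
      using choose3[of ?n] by linarith
    thus ?thesis by simp
  qed
  ultimately show ?thesis using False by simp
qed

end
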